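(* Let $\mathbf p$ be a critical reproduction law with finite variance $\sigma^2$. Suppose that its tail distribution satisfies $\bar F(x)>0$ for all $x>0$ and $$\lim_{y\to\infty}\limsup_{x\to\infty}\frac{\bar F(xy)}{\bar F(x)}=0.$$ Then $$\mathbb{P}(X^\ast_1>x)\sim\sqrt{2\bar F(x)/\sigma^2}\qquad\text{as }x\to\infty.$$
   Context: $\mathbf p=(p(n))_{n\in\mathbb{N}}$ is a probability measure on the nonnegative integers with $\sum_n np(n)=1$ (criticality), $\mathbf p\ne\delta_1$, and variance $\sigma^2=\sum_n n^2p(n)-1<\infty$. For real $x$, $\bar F(x)=\sum_{n>x}p(n)$. Consider a Galton–Watson process with reproduction law $\mathbf p$ started from one ancestor; $T_1$ is its total population size (ancestor included), $X_1,\dots,X_{T_1}$ are the numbers of children of its individuals (in some arbitrary enumeration), and $X^\ast_1=\max\{X_i:1\le i\le T_1\}$. *)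

theory Defs
  imports "HOL-Analysis.Analysis" "HOL-Library.Landau_Symbols"
begin

datatype ptree = Node "ptree list"

text \<open>Probability that a Galton-Watson tree with reproduction law p equals the
  finite plane tree t: the product over all vertices u of p(number of children of u).\<close>
fun gw_weight :: "(nat \<Rightarrow> real) \<Rightarrow> ptree \<Rightarrow> real" where
  "gw_weight p (Node ts) = p (length ts) * prod_list (map (gw_weight p) ts)"

fun tsize :: "ptree \<Rightarrow> nat" where
  "tsize (Node ts) = Suc (sum_list (map tsize ts))"

fun maxdeg :: "ptree \<Rightarrow> nat" where
  "maxdeg (Node ts) = Max (insert (length ts) (set (map maxdeg ts)))"

definition Fbar :: "(nat \<Rightarrow> real) \<Rightarrow> real \<Rightarrow> real" where
  "Fbar p x = (\<Sum>n. if real n > x then p n else 0)"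

text \<open>P(X*_1 > x) for the GW tree started from one ancestor (the critical GW tree is
  a.s. finite, so its law is the measure on finite plane trees given by gw_weight).\<close>
definition max_offspring_tail :: "(nat \<Rightarrow> real) \<Rightarrow> real \<Rightarrow> real" where
  "max_offspring_tail p x = infsum (\<lambda>t. if real (maxdeg t) > x then gw_weight p t else 0) UNIV"

end

theory Submission
  imports Defs
begin


fun kids :: "ptree \<Rightarrow> ptree list" where "kids (Node ts) = ts"

lemma Node_kids: "Node (kids t) = t" by (cases t) auto

lemma gw_nonneg: "(\<And>n. 0 \<le> r n) \<Longrightarrow> 0 \<le> gw_weight r t"
proof (induction t)
  case (Node ts)
  then show ?case by (auto intro!: mult_nonneg_nonneg prod_list_nonneg)
qed

lemma sum_lists_pow:
  assumes "finite A"
  shows "(\<Sum>ts\<in>{ts. set ts \<subseteq> A \<and> length ts = n}. prod_list (map w ts)) = (sum w A :: real) ^ n"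
proof (induction n)
  case 0
  have "{ts. set ts \<subseteq> A \<and> length ts = 0} = {[]}" by auto
  then show ?case by simp
next
  case (Suc n)
  let ?L = "{ts. set ts \<subseteq> A \<and> length ts = n}"
  have eq: "{ts. set ts \<subseteq> A \<and> length ts = Suc n} = (\<lambda>(t,ts). t#ts) ` (A \<times> ?L)"
    by (auto simp: length_Suc_conv image_iff)
  have inj: "inj_on (\<lambda>(t,ts). t#ts) (A \<times> ?L)" by (auto simp: inj_on_def)
  have "(\<Sum>ts\<in>{ts. set ts \<subseteq> A \<and> length ts = Suc n}. prod_list (map w ts))
      = (\<Sum>(t,ts)\<in>A \<times> ?L. w t * prod_list (map w ts))"
    unfolding eq by (subst sum.reindex[OF inj]) (simp add: case_prod_unfold)
  also have "\<dots> = (\<Sum>t\<in>A. \<Sum>ts\<in>?L. w t * prod_list (map w ts))"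
    by (rule sum.cartesian_product[symmetric])
  also have "\<dots> = sum w A * (sum w A)^n"
    by (simp add: sum_distrib_left[symmetric] Suc sum_distrib_right)
  finally show ?case by simp
qed

lemma sum_Node_poly:
  assumes "finite A"
  shows "sum (gw_weight r) (Node ` {ts. set ts \<subseteq> A \<and> length ts < N})
       = (\<Sum>n<N. r n * (sum (gw_weight r) A) ^ n)"
proof -
  let ?L = "\<lambda>n. {ts. set ts \<subseteq> A \<and> length ts = n}"
  have fin: "\<And>n. finite (?L n)" using finite_lists_length_eq[OF assms] by blast
  have U: "{ts. set ts \<subseteq> A \<and> length ts < N} = (\<Union>n\<in>{..<N}. ?L n)" by auto
  have "sum (gw_weight r) (Node ` {ts. set ts \<subseteq> A \<and> length ts < N})
      = (\<Sum>ts\<in>{ts. set ts \<subseteq> A \<and> length ts < N}. gw_weight r (Node ts))"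
    by (subst sum.reindex) (auto simp: inj_on_def)
  also have "\<dots> = (\<Sum>n<N. \<Sum>ts\<in>?L n. gw_weight r (Node ts))"
    unfolding U by (subst sum.UNION_disjoint) (auto simp: fin)
  also have "\<dots> = (\<Sum>n<N. \<Sum>ts\<in>?L n. r n * prod_list (map (gw_weight r) ts))"
    by (intro sum.cong refl) auto
  also have "\<dots> = (\<Sum>n<N. r n * (sum (gw_weight r) A) ^ n)"
    by (simp add: sum_distrib_left[symmetric] sum_lists_pow[OF assms])
  finally show ?thesis .
qed

definition childs :: "ptree set \<Rightarrow> ptree set" where
  "childs F = (\<Union>t\<in>F. set (kids t))"

lemma finite_childs: "finite F \<Longrightarrow> finite (childs F)"
  unfolding childs_def by auto

lemma F_sub:
  assumes "finite F"
  shows "F \<subseteq> Node ` {ts. set ts \<subseteq> childs F \<and> length ts < Suc (Max (insert 0 ((\<lambda>t. length (kids t)) ` F)))}"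
proof
  fix t assume t: "t \<in> F"
  have "length (kids t) \<le> Max (insert 0 ((\<lambda>t. length (kids t)) ` F))"
    using assms t by (intro Max_ge) auto
  moreover have "set (kids t) \<subseteq> childs F" using t by (auto simp: childs_def)
  ultimately show "t \<in> Node ` {ts. set ts \<subseteq> childs F \<and> length ts < Suc (Max (insert 0 ((\<lambda>t. length (kids t)) ` F)))}"
    by (intro image_eqI[of _ _ "kids t"]) (auto simp: Node_kids)
qed

lemma KB:
  assumes nn: "\<And>n. 0 \<le> r n" and sr: "summable r"
    and F: "finite F" and a0: "0 \<le> sum (gw_weight r) (childs F)" and a1: "sum (gw_weight r) (childs F) \<le> 1"
  shows "sum (gw_weight r) F \<le> (\<Sum>n. r n * (sum (gw_weight r) (childs F)) ^ n)"
proof -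
  let ?a = "sum (gw_weight r) (childs F)"
  let ?N = "Suc (Max (insert 0 ((\<lambda>t. length (kids t)) ` F)))"
  have fin: "finite (Node ` {ts. set ts \<subseteq> childs F \<and> length ts < ?N})"
    using finite_childs[OF F] finite_lists_length_le[of "childs F" ?N]
    by (intro finite_imageI) (auto elim: finite_subset[rotated])
  have "sum (gw_weight r) F \<le> sum (gw_weight r) (Node ` {ts. set ts \<subseteq> childs F \<and> length ts < ?N})"
    by (rule sum_mono2[OF fin F_sub[OF F]]) (auto intro: gw_nonneg nn)
  also have "\<dots> = (\<Sum>n<?N. r n * ?a ^ n)" by (rule sum_Node_poly[OF finite_childs[OF F]])
  also have "\<dots> \<le> (\<Sum>n. r n * ?a ^ n)"
  proof (rule sum_le_suminf)
    show "summable (\<lambda>n. r n * ?a ^ n)"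
      by (rule summable_comparison_test'[OF sr]) (use nn a0 a1 in \<open>auto intro!: mult_left_le power_le_one\<close>)
  qed (use nn a0 in auto)
  finally show ?thesis .
qed

lemma tsize_child: "t \<in> set (kids u) \<Longrightarrow> tsize t < tsize u"
proof (cases u)
  case (Node ts)
  assume "t \<in> set (kids u)"
  then have "tsize t \<in> set (map tsize ts)" using Node by auto
  then have "tsize t \<le> sum_list (map tsize ts)" by (rule member_le_sum_list) auto
  then show ?thesis using Node by simp
qed

lemma size_bound:
  assumes nn: "\<And>n. 0 \<le> r n" and sr: "summable r" and s1: "suminf r \<le> 1"
  shows "finite F \<Longrightarrow> F \<subseteq> {t. tsize t \<le> N} \<Longrightarrow> sum (gw_weight r) F \<le> 1"
proof (induction N arbitrary: F)
  case 0
  have "F = {}"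
  proof (rule ccontr)
    assume "F \<noteq> {}" then obtain t where "t \<in> F" by auto
    with 0 have "tsize t \<le> 0" by auto
    then show False by (cases t) auto
  qed
  then show ?case by simp
next
  case (Suc N)
  have cs: "childs F \<subseteq> {t. tsize t \<le> N}"
    using Suc.prems(2) tsize_child by (fastforce simp: childs_def)
  let ?a = "sum (gw_weight r) (childs F)"
  have a1: "?a \<le> 1" using Suc.IH[OF finite_childs[OF Suc.prems(1)] cs] .
  have a0: "0 \<le> ?a" by (intro sum_nonneg gw_nonneg nn)
  have "sum (gw_weight r) F \<le> (\<Sum>n. r n * ?a ^ n)" by (rule KB[OF nn sr Suc.prems(1) a0 a1])
  also have "\<dots> \<le> suminf r"
    by (rule suminf_le) (use nn a0 a1 in \<open>auto intro!: mult_left_le power_le_one summable_comparison_test'[OF sr]\<close>)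
  finally show ?case using s1 by linarith
qed

lemma finite_bound:
  assumes nn: "\<And>n. 0 \<le> r n" and sr: "summable r" and s1: "suminf r \<le> 1" and F: "finite F"
  shows "sum (gw_weight r) F \<le> 1"
  by (rule size_bound[OF nn sr s1 F, of "Max (insert 0 (tsize ` F))"]) (use F in auto)

lemma gw_summable:
  assumes nn: "\<And>n. 0 \<le> r n" and sr: "summable r" and s1: "suminf r \<le> 1"
  shows "gw_weight r summable_on UNIV"
  by (rule nonneg_bdd_above_summable_on) (use gw_nonneg[OF nn] finite_bound[OF nn sr s1] in \<open>auto simp: bdd_above_def\<close>)

lemma gw_main:
  assumes nn: "\<And>n. 0 \<le> r n" and sr: "summable r" and s1: "suminf r \<le> 1"
  defines "M \<equiv> infsum (gw_weight r) UNIV"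
  shows "0 \<le> M" "M \<le> 1" "M = (\<Sum>n. r n * M ^ n)"
proof -
  have sw: "gw_weight r summable_on UNIV" by (rule gw_summable[OF nn sr s1])
  show M0: "0 \<le> M" unfolding M_def by (rule infsum_nonneg) (use gw_nonneg[OF nn] in auto)
  show M1: "M \<le> 1" unfolding M_def by (rule infsum_le_finite_sums[OF sw]) (use finite_bound[OF nn sr s1] in auto)
  have fs: "\<And>B. finite B \<Longrightarrow> sum (gw_weight r) B \<le> M"
    unfolding M_def by (rule finite_sum_le_infsum[OF sw]) (use gw_nonneg[OF nn] in auto)
  have sm: "summable (\<lambda>n. r n * M ^ n)"
    by (rule summable_comparison_test'[OF sr]) (use nn M0 M1 in \<open>auto intro!: mult_left_le power_le_one\<close>)
  have le: "M \<le> (\<Sum>n. r n * M ^ n)"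
    unfolding M_def
  proof (rule infsum_le_finite_sums[OF sw])
    fix F :: "ptree set" assume F: "finite F"
    let ?a = "sum (gw_weight r) (childs F)"
    have a0: "0 \<le> ?a" by (intro sum_nonneg gw_nonneg nn)
    have aM: "?a \<le> M" using fs finite_childs[OF F] by blast
    have "sum (gw_weight r) F \<le> (\<Sum>n. r n * ?a ^ n)" 
      by (rule KB[OF nn sr F a0]) (use aM M1 in linarith)
    also have "\<dots> \<le> (\<Sum>n. r n * M ^ n)"
      by (rule suminf_le) (use nn a0 aM M1 sm in \<open>auto intro!: mult_left_mono power_mono summable_comparison_test'[OF sr] mult_left_le power_le_one\<close>)
    finally show "sum (gw_weight r) F \<le> (\<Sum>n. r n * infsum (gw_weight r) UNIV ^ n)" unfolding M_def .
  qed
  have ge: "(\<Sum>n. r n * M ^ n) \<le> M"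
  proof (rule suminf_le_const[OF sm])
    fix N
    have hs: "(gw_weight r has_sum M) UNIV" unfolding M_def using sw by simp
    then have lim: "(sum (gw_weight r) \<longlongrightarrow> M) (finite_subsets_at_top UNIV)" by (simp add: has_sum_def)
    have lim2: "((\<lambda>A. \<Sum>n<N. r n * (sum (gw_weight r) A) ^ n) \<longlongrightarrow> (\<Sum>n<N. r n * M ^ n)) (finite_subsets_at_top UNIV)"
      by (intro tendsto_intros lim)
    show "(\<Sum>n<N. r n * M ^ n) \<le> M"
    proof (rule tendsto_upperbound[OF lim2])
      show "\<forall>\<^sub>F A in finite_subsets_at_top UNIV. (\<Sum>n<N. r n * sum (gw_weight r) A ^ n) \<le> M"
        unfolding eventually_finite_subsets_at_top
      proof (rule exI[of _ "{}"], intro conjI allI impI)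
        show "finite ({}::ptree set)" "{} \<subseteq> (UNIV::ptree set)" by auto
      next
        fix A :: "ptree set" assume "finite A \<and> {} \<subseteq> A \<and> A \<subseteq> UNIV"
        then have A: "finite A" by simp
        have "finite {ts. set ts \<subseteq> A \<and> length ts < N}"
          using finite_lists_length_le[OF A, of N] by (auto elim: finite_subset[rotated])
        then show "(\<Sum>n<N. r n * sum (gw_weight r) A ^ n) \<le> M"
          by (auto simp: sum_Node_poly[OF A, symmetric] intro!: fs)
      qed
    qed simp
  qed
  show "M = (\<Sum>n. r n * M ^ n)" using le ge by linarith
qed




lemma gw_trunc:
  "gw_weight (\<lambda>n. if real n > x then 0 else p n) t = (if real (maxdeg t) > x then 0 else gw_weight p t)"
proof (induction t)
  case (Node ts)
  have md: "real (maxdeg (Node ts)) > x \<longleftrightarrow> real (length ts) > x \<or> (\<exists>c\<in>set ts. real (maxdeg c) > x)"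
  proof -
    have "real (maxdeg (Node ts)) > x \<longleftrightarrow> (\<exists>a\<in>insert (length ts) (maxdeg ` set ts). real a > x)"
    proof
      assume "real (maxdeg (Node ts)) > x"
      moreover have "maxdeg (Node ts) \<in> insert (length ts) (maxdeg ` set ts)"
        by (simp del: insert_iff)
      ultimately show "\<exists>a\<in>insert (length ts) (maxdeg ` set ts). real a > x" by blast
    next
      assume "\<exists>a\<in>insert (length ts) (maxdeg ` set ts). real a > x"
      then obtain a where a: "a \<in> insert (length ts) (maxdeg ` set ts)" "real a > x" by blast
      have "a \<le> maxdeg (Node ts)" using a(1) by simp
      then show "real (maxdeg (Node ts)) > x" using a(2) by linarith
    qed
    then show ?thesis by auto
  qed
  show ?case
  proof (cases "real (maxdeg (Node ts)) > x")
    case True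
    then show ?thesis
    proof (cases "real (length ts) > x")
      case True then show ?thesis using md by simp
    next
      case False
      with True md obtain c where c: "c \<in> set ts" "real (maxdeg c) > x" by blast
      have "gw_weight (\<lambda>n. if real n > x then 0 else p n) c = 0" using Node.IH[OF c(1)] c(2) by simp
      then have "prod_list (map (gw_weight (\<lambda>n. if real n > x then 0 else p n)) ts) = 0"
        using c(1) by (auto simp: prod_list_zero_iff)
      then show ?thesis using True by simp
    qed
  next
    case False
    have mapeq: "map (gw_weight (\<lambda>n. if real n > x then 0 else p n)) ts = map (gw_weight p) ts"
      using md Node.IH False by (auto intro!: map_cong)
    have L: "\<not> real (length ts) > x" using md False by simp
    have "gw_weight (\<lambda>n. if real n > x then 0 else p n) (Node ts) = p (length ts) * prod_list (map (gw_weight p) ts)"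
      by (simp only: gw_weight.simps mapeq) (simp add: L)
    then show ?thesis using False by simp
  qed
qed

definition phi :: "nat \<Rightarrow> real \<Rightarrow> real" where
  "phi n q = (\<Sum>m<n. \<Sum>i<m. (1-q)^i)"

lemma phi_h: "q^2 * phi n q = (1-q)^n - 1 + real n * q"
proof (induction n)
  case 0 then show ?case by (simp add: phi_def)
next
  case (Suc n)
  have "q^2 * phi (Suc n) q = q^2 * phi n q + q * (q * (\<Sum>i<n. (1-q)^i))"
    by (simp add: phi_def algebra_simps power2_eq_square)
  also have "q * (\<Sum>i<n. (1-q)^i) = 1 - (1-q)^n"
    using one_diff_power_eq[of "1-q" n] by simp
  finally show ?case using Suc by (simp add: algebra_simps)
qed

lemma phi_nonneg: "q \<le> 1 \<Longrightarrow> 0 \<le> phi n q"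
  unfolding phi_def by (intro sum_nonneg) auto

lemma phi_le: assumes "0 \<le> q" "q \<le> 1" shows "phi n q \<le> real n ^ 2"
proof -
  have "phi n q \<le> (\<Sum>m<n. \<Sum>i<m. (1::real))"
    unfolding phi_def using assms by (intro sum_mono power_le_one) auto
  also have "\<dots> \<le> (\<Sum>m<n. real n)" by (intro sum_mono) auto
  finally show ?thesis by (simp add: power2_eq_square)
qed

lemma phi_zero: "2 * phi n 0 = real n ^ 2 - real n"
proof (induction n)
  case 0 then show ?case by (simp add: phi_def)
next
  case (Suc n)
  have "phi (Suc n) 0 = phi n 0 + real n" by (simp add: phi_def)
  then show ?case using Suc by (simp add: algebra_simps power2_eq_square)
qed

lemma phi_ge1: assumes "2 \<le> n" "q \<le> 1" shows "1 \<le> phi n q"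
proof -
  have "phi 2 q = 1" by (simp add: phi_def numeral_2_eq_2)
  moreover have "phi 2 q \<le> phi n q"
    unfolding phi_def using assms by (intro sum_mono2) (auto intro!: sum_nonneg)
  ultimately show ?thesis by simp
qed




locale gwl =
  fixes p :: "nat \<Rightarrow> real"
  assumes nonneg: "\<And>n. p n \<ge> 0"
    and prob: "p sums 1"
    and critical: "(\<lambda>n. real n * p n) sums 1"
    and nondeg: "p \<noteq> (\<lambda>n. if n = 1 then 1 else 0)"
    and fin_var: "summable (\<lambda>n. (real n)\<^sup>2 * p n)"
begin

definition Phi :: "real \<Rightarrow> real" where "Phi q = (\<Sum>n. p n * phi n q)"
definition S :: real where "S = (\<Sum>n. (real n)\<^sup>2 * p n)"

lemma sp: "summable p" using prob by (rule sums_summable)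

lemma exists_n0: "\<exists>n0\<ge>2. p n0 > 0"
proof (rule ccontr)
  assume "\<not> ?thesis"
  then have z: "\<And>n. n \<ge> 2 \<Longrightarrow> p n = 0" using nonneg by (meson le_less not_le)
  have "p sums (\<Sum>n\<in>{..<2}. p n)" by (rule sums_finite) (auto simp: z)
  then have e1: "p 0 + p 1 = 1" using prob sums_unique2 by (simp add: numeral_2_eq_2)
  have "(\<lambda>n. real n * p n) sums (\<Sum>n\<in>{..<2}. real n * p n)" by (rule sums_finite) (auto simp: z)
  then have e2: "p 1 = 1" using critical sums_unique2 by (simp add: numeral_2_eq_2)
  have "p = (\<lambda>n. if n = 1 then 1 else 0)"
  proof
    fix n show "p n = (if n = 1 then 1 else 0)"
      using e1 e2 z[of n] by (cases "n = 0"; cases "n = 1") auto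
  qed
  then show False using nondeg by simp
qed

definition n0 where "n0 = (SOME n. n \<ge> 2 \<and> p n > 0)"
lemma n0: "n0 \<ge> 2" "p n0 > 0" using someI_ex[OF exists_n0] unfolding n0_def by auto

lemma summ_phi: assumes "0 \<le> q" "q \<le> 1" shows "summable (\<lambda>n. p n * phi n q)"
  by (rule summable_comparison_test'[OF fin_var])
     (use assms nonneg phi_nonneg phi_le in \<open>auto simp: abs_mult mult.commute intro!: mult_left_mono\<close>)

lemma Phi_ge: assumes "0 \<le> q" "q \<le> 1" shows "p n0 \<le> Phi q"
proof -
  have "p n0 \<le> p n0 * phi n0 q" using phi_ge1[OF n0(1) assms(2)] n0(2) by simp
  also have "\<dots> = (\<Sum>n\<in>{n0}. p n * phi n q)" by simp
  also have "\<dots> \<le> Phi q" unfolding Phi_def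
    by (rule sum_le_suminf[OF summ_phi[OF assms]]) (use nonneg phi_nonneg assms in auto)
  finally show ?thesis .
qed

lemma Phi_cont: "continuous_on {0..1} Phi"
proof -
  have ul: "uniform_limit {0..1} (\<lambda>N q. \<Sum>n<N. p n * phi n q) (\<lambda>q. \<Sum>n. p n * phi n q) sequentially"
    by (rule Weierstrass_m_test[OF _ fin_var])
       (use nonneg phi_nonneg phi_le in \<open>auto simp: abs_mult mult.commute intro!: mult_left_mono\<close>)
  have "continuous_on {0..1} (\<lambda>q. \<Sum>n. p n * phi n q)"
    by (rule uniform_limit_theorem[OF _ ul]) (auto simp: phi_def intro!: always_eventually continuous_intros)
  then show ?thesis unfolding Phi_def[abs_def] .
qed

lemma Phi0: "Phi 0 = (S - 1) / 2"
proof -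
  have "(\<lambda>n. ((real n)\<^sup>2 * p n - real n * p n) / 2) sums ((S - 1) / 2)"
    unfolding S_def by (intro sums_divide sums_diff critical summable_sums fin_var)
  moreover have "(\<lambda>n. ((real n)\<^sup>2 * p n - real n * p n) / 2) = (\<lambda>n. p n * phi n 0)"
  proof
    fix n show "((real n)\<^sup>2 * p n - real n * p n) / 2 = p n * phi n 0"
    proof -
      have "(real n)\<^sup>2 = 2 * phi n 0 + real n" using phi_zero[of n] by simp
      then show ?thesis by (simp add: algebra_simps)
    qed
  qed
  ultimately show ?thesis unfolding Phi_def by (simp add: sums_iff)
qed

lemma S_pos: "S - 1 > 0"
  using Phi0 Phi_ge[of 0] n0 by simp

lemma sps: assumes "0 \<le> s" "s \<le> 1" shows "summable (\<lambda>n. p n * s ^ n)"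
  by (rule summable_comparison_test'[OF sp]) (use assms nonneg in \<open>auto intro!: mult_left_le power_le_one simp: abs_mult\<close>)

lemma key_id: assumes "0 \<le> s" "s \<le> 1"
  shows "(1-s)^2 * Phi (1-s) = (\<Sum>n. p n * s^n) - s"
proof -
  let ?q = "1 - s"
  have "(\<lambda>n. p n * s^n - p n + ?q * (real n * p n)) sums ((\<Sum>n. p n * s^n) - 1 + ?q * 1)"
    by (intro sums_add sums_diff sums_mult critical prob summable_sums sps assms)
  moreover have "(\<lambda>n. ?q^2 * (p n * phi n ?q)) sums (?q^2 * Phi ?q)"
    unfolding Phi_def by (intro sums_mult summable_sums summ_phi) (use assms in auto)
  moreover have "(\<lambda>n. p n * s^n - p n + ?q * (real n * p n)) = (\<lambda>n. ?q^2 * (p n * phi n ?q))"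
  proof
    fix n
    have "?q^2 * (p n * phi n ?q) = p n * (?q^2 * phi n ?q)" by simp
    also have "\<dots> = p n * ((1 - ?q)^n - 1 + real n * ?q)" by (simp only: phi_h)
    finally show "p n * s^n - p n + ?q * (real n * p n) = ?q^2 * (p n * phi n ?q)"
      by (simp add: algebra_simps)
  qed
  ultimately show ?thesis using sums_unique2 by fastforce
qed

end



lemma tail_summable: "(\<And>n. 0 \<le> g n) \<Longrightarrow> summable g \<Longrightarrow> summable (\<lambda>n. if P n then g n else (0::real))"
  by (rule summable_comparison_test'[of g]) auto

lemma tail_tendsto:
  fixes g :: "nat \<Rightarrow> real"
  assumes nn: "\<And>n. 0 \<le> g n" and sg: "summable g"
  shows "((\<lambda>x::real. \<Sum>n. if real n > x then g n else 0) \<longlongrightarrow> 0) at_top"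
proof (rule tendstoI)
  fix e :: real assume e: "0 < e"
  obtain N where N: "\<And>n. n \<ge> N \<Longrightarrow> norm (\<Sum>i. g (i + n)) < e"
    using suminf_exist_split[OF e sg] by blast
  let ?h = "\<lambda>n. if n \<ge> N then g n else 0"
  have sh: "summable ?h" by (rule tail_summable[OF nn sg])
  have "(\<lambda>i. ?h (i + N)) sums suminf ?h"
    using sums_zero_iff_shift[of N ?h "suminf ?h"] sh by (simp add: summable_sums)
  then have hN: "suminf ?h = (\<Sum>i. g (i + N))" by (simp add: sums_iff)
  show "\<forall>\<^sub>F x in at_top. dist (\<Sum>n. if real n > x then g n else 0) 0 < e"
  proof (rule eventually_at_top_linorderI[of "real N"])
    fix x assume x: "real N \<le> x"
    have s0: "0 \<le> (\<Sum>n. if real n > x then g n else 0)"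
      by (rule suminf_nonneg[OF tail_summable[OF nn sg]]) (use nn in auto)
    have "(\<Sum>n. if real n > x then g n else 0) \<le> suminf ?h"
      by (rule suminf_le[OF _ tail_summable[OF nn sg] sh]) (use nn x in auto)
    also have "\<dots> < e" using N[of N] hN by simp
    finally show "dist (\<Sum>n. if real n > x then g n else 0) 0 < e" using s0 by simp
  qed
qed

context gwl begin

definition px :: "real \<Rightarrow> nat \<Rightarrow> real" where "px x = (\<lambda>n. if real n > x then 0 else p n)"
definition W :: "real \<Rightarrow> real" where "W x = infsum (gw_weight (px x)) UNIV"
definition q :: "real \<Rightarrow> real" where "q x = 1 - W x"
definition R :: "real \<Rightarrow> real" where "R x = (\<Sum>n. if real n > x then p n * W x ^ n else 0)"

lemma px_ok: "\<And>n. 0 \<le> px x n" "summable (px x)" "suminf (px x) \<le> 1"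
proof -
  show nn: "\<And>n. 0 \<le> px x n" using nonneg by (simp add: px_def)
  show s: "summable (px x)" unfolding px_def by (rule summable_comparison_test'[OF sp]) (use nonneg in auto)
  have "suminf (px x) \<le> suminf p" by (rule suminf_le[OF _ s sp]) (use nonneg in \<open>auto simp: px_def\<close>)
  then show "suminf (px x) \<le> 1" using prob by (simp add: sums_iff)
qed

lemma p_ok: "summable p" "suminf p \<le> 1" using sp prob by (auto simp: sums_iff)

lemma W_props: "0 \<le> W x" "W x \<le> 1" "W x = (\<Sum>n. px x n * W x ^ n)"
  using gw_main[OF px_ok] unfolding W_def by auto

lemma M_one: "infsum (gw_weight p) UNIV = 1"
proof -
  let ?M = "infsum (gw_weight p) UNIV"
  have M: "0 \<le> ?M" "?M \<le> 1" "?M = (\<Sum>n. p n * ?M ^ n)" using gw_main[OF nonneg p_ok] by auto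
  have "(1 - ?M)^2 * Phi (1 - ?M) = 0" using key_id[OF M(1,2)] M(3) by simp
  moreover have "Phi (1 - ?M) > 0" using Phi_ge[of "1 - ?M"] M n0 by simp
  ultimately show ?thesis by simp
qed

lemma mot: "max_offspring_tail p x = q x"
proof -
  let ?A = "\<lambda>t. if real (maxdeg t) > x then gw_weight p t else 0"
  have sw: "gw_weight p summable_on UNIV" by (rule gw_summable[OF nonneg p_ok])
  have sA: "?A summable_on UNIV"
    by (rule summable_on_comparison_test[OF sw]) (use gw_nonneg[OF nonneg] in auto)
  have sW: "gw_weight (px x) summable_on UNIV" by (rule gw_summable[OF px_ok])
  have "gw_weight p = (\<lambda>t. ?A t + gw_weight (px x) t)"
    by (rule ext) (simp add: px_def gw_trunc)
  then have "infsum (gw_weight p) UNIV = infsum ?A UNIV + W x"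
    unfolding W_def by (metis (no_types, lifting) infsum_add[OF sA sW])
  then show ?thesis using M_one by (simp add: max_offspring_tail_def q_def)
qed

lemma Fbar_summ: "summable (\<lambda>n. if real n > x then p n else 0)"
  by (rule tail_summable[OF nonneg sp])

lemma R_bounds: "0 \<le> R x" "R x \<le> Fbar p x"
proof -
  have W: "0 \<le> W x" "W x \<le> 1" using W_props by auto
  have s: "summable (\<lambda>n. if real n > x then p n * W x ^ n else 0)"
    by (rule summable_comparison_test'[OF sp]) (use W nonneg in \<open>auto intro!: mult_left_le power_le_one simp: abs_mult\<close>)
  show "0 \<le> R x" unfolding R_def by (rule suminf_nonneg[OF s]) (use W nonneg in auto)
  show "R x \<le> Fbar p x" unfolding R_def Fbar_def
    by (rule suminf_le[OF _ s Fbar_summ]) (use W nonneg in \<open>auto intro!: mult_left_le power_le_one\<close>)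
qed

lemma qR: "(q x)^2 * Phi (q x) = R x"
proof -
  have W: "0 \<le> W x" "W x \<le> 1" using W_props by auto
  have s1: "summable (\<lambda>n. px x n * W x ^ n)"
    by (rule summable_comparison_test'[OF sp]) (use W nonneg in \<open>auto intro!: mult_left_le power_le_one simp: abs_mult px_def\<close>)
  have s2: "summable (\<lambda>n. if real n > x then p n * W x ^ n else 0)"
    by (rule summable_comparison_test'[OF sp]) (use W nonneg in \<open>auto intro!: mult_left_le power_le_one simp: abs_mult\<close>)
  have "(\<Sum>n. p n * W x ^ n) = (\<Sum>n. px x n * W x ^ n + (if real n > x then p n * W x ^ n else 0))"
    by (rule suminf_cong) (simp add: px_def)
  also have "\<dots> = W x + R x" using suminf_add[OF s1 s2] W_props(3) by (simp add: R_def)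
  finally show ?thesis using key_id[OF W] by (simp add: q_def)
qed

lemma q_bounds: "0 \<le> q x" "q x \<le> 1" using W_props by (auto simp: q_def)

end



locale gwl2 = gwl +
  assumes tail_pos: "\<And>x. x > 0 \<Longrightarrow> Fbar p x > 0"
    and tail_cond: "((\<lambda>y. Limsup at_top (\<lambda>x. ereal (Fbar p (x * y) / Fbar p x))) \<longlongrightarrow> 0) at_top"
begin

definition T2 :: "real \<Rightarrow> real" where "T2 x = (\<Sum>n. if real n > x then (real n)\<^sup>2 * p n else 0)"

lemma F_nonneg: "0 \<le> Fbar p x"
  unfolding Fbar_def by (rule suminf_nonneg[OF Fbar_summ]) (use nonneg in auto)

lemma F_lim: "((\<lambda>x. Fbar p x) \<longlongrightarrow> 0) at_top"
  unfolding Fbar_def[abs_def] by (rule tail_tendsto[OF nonneg sp])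

lemma T2_lim: "(T2 \<longlongrightarrow> 0) at_top"
  unfolding T2_def[abs_def] by (rule tail_tendsto[OF _ fin_var]) (use nonneg in auto)

lemma xF_T2: assumes "0 \<le> x" shows "x^2 * Fbar p x \<le> T2 x"
proof -
  have "x^2 * Fbar p x = (\<Sum>n. x^2 * (if real n > x then p n else 0))"
    unfolding Fbar_def by (rule suminf_mult[OF Fbar_summ, symmetric])
  also have "\<dots> \<le> T2 x" unfolding T2_def
  proof (rule suminf_le)
    show "summable (\<lambda>n. x^2 * (if real n > x then p n else 0))" by (intro summable_mult Fbar_summ)
    show "summable (\<lambda>n. if real n > x then (real n)\<^sup>2 * p n else 0)"
      by (rule tail_summable[OF _ fin_var]) (use nonneg in auto)
    fix n show "x^2 * (if real n > x then p n else 0) \<le> (if real n > x then (real n)\<^sup>2 * p n else 0)"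
      using assms nonneg[of n] by (auto intro!: mult_right_mono power_mono)
  qed
  finally show ?thesis .
qed

abbreviation "c \<equiv> p n0"

lemma qc: "(q x)^2 * c \<le> Fbar p x"
proof -
  have "(q x)^2 * c \<le> (q x)^2 * Phi (q x)" using Phi_ge[OF q_bounds] by (intro mult_left_mono) auto
  then show ?thesis using qR[of x] R_bounds[of x] by linarith
qed

lemma q_lim: "(q \<longlongrightarrow> 0) at_top"
proof (rule tendsto_sandwich[of "\<lambda>_. 0" _ _ "\<lambda>x. sqrt (Fbar p x / c)"])
  show "\<forall>\<^sub>F x in at_top. 0 \<le> q x" using q_bounds by simp
  show "\<forall>\<^sub>F x in at_top. q x \<le> sqrt (Fbar p x / c)"
  proof (intro always_eventually allI)
    fix x
    have "(q x)^2 \<le> Fbar p x / c" using qc[of x] n0 by (simp add: field_simps)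
    then show "q x \<le> sqrt (Fbar p x / c)" by (rule real_le_rsqrt)
  qed
  have "((\<lambda>x. sqrt (Fbar p x / c)) \<longlongrightarrow> sqrt (0 / c)) at_top" by (intro tendsto_intros F_lim) (use n0 in auto)
  then show "((\<lambda>x. sqrt (Fbar p x / c)) \<longlongrightarrow> 0) at_top" using n0 by simp
qed simp

lemma qx_lim: "((\<lambda>x. q x * x) \<longlongrightarrow> 0) at_top"
proof (rule tendsto_sandwich[of "\<lambda>_. 0" _ _ "\<lambda>x. sqrt (T2 x / c)"])
  show "\<forall>\<^sub>F x in at_top. 0 \<le> q x * x"
    using q_bounds by (intro eventually_at_top_linorderI[of 0]) auto
  show "\<forall>\<^sub>F x in at_top. q x * x \<le> sqrt (T2 x / c)"
  proof (rule eventually_at_top_linorderI[of 0])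
    fix x :: real assume x: "0 \<le> x"
    have "(q x * x)^2 * c = x^2 * ((q x)^2 * c)" by (simp add: algebra_simps power2_eq_square)
    also have "\<dots> \<le> x^2 * Fbar p x" using qc by (intro mult_left_mono) auto
    also have "\<dots> \<le> T2 x" by (rule xF_T2[OF x])
    finally have "(q x * x)^2 \<le> T2 x / c" using n0 by (simp add: field_simps)
    then show "q x * x \<le> sqrt (T2 x / c)" by (rule real_le_rsqrt)
  qed
  have "((\<lambda>x. sqrt (T2 x / c)) \<longlongrightarrow> sqrt (0 / c)) at_top" by (intro tendsto_intros T2_lim) (use n0 in auto)
  then show "((\<lambda>x. sqrt (T2 x / c)) \<longlongrightarrow> 0) at_top" using n0 by simp
qed simp

lemma Phi_lim: "((\<lambda>x. Phi (q x)) \<longlongrightarrow> (S - 1) / 2) at_top"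
proof -
  have "((\<lambda>x. Phi (q x)) \<longlongrightarrow> Phi 0) at_top"
    by (rule continuous_on_tendsto_compose[OF Phi_cont q_lim]) (use q_bounds in auto)
  then show ?thesis by (simp add: Phi0)
qed

end



context gwl2 begin

lemma aux_eq: "F > 0 \<Longrightarrow> P > 0 \<Longrightarrow> s > (0::real) \<Longrightarrow> (Rr / F) * (s / 2) / P = (Rr / P) / (2 * F / s)"
  by (simp add: field_simps)

lemma aux2: "F > 0 \<Longrightarrow> b * (F - G) \<le> Rr \<Longrightarrow> b * (1 - G / F) \<le> Rr / (F::real)"
proof -
  assume F: "F > 0" and h: "b * (F - G) \<le> Rr"
  have "b * (1 - G / F) = b * (F - G) / F" using F by (simp add: field_simps)
  then show ?thesis using h F by (simp add: divide_right_mono)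
qed

lemma R_lower:
  assumes x: "0 < x" and y: "1 \<le> y" and qy: "q x * x * y \<le> 1"
  shows "(1 - q x * x * y) * (Fbar p x - Fbar p (x * y)) \<le> R x"
proof -
  let ?b = "1 - q x * x * y"
  have W: "0 \<le> W x" "W x \<le> 1" using W_props by auto
  have xy: "x \<le> x * y" using x y by simp
  have s2: "summable (\<lambda>n. if real n > x then p n * W x ^ n else 0)"
    by (rule summable_comparison_test'[OF sp]) (use W nonneg in \<open>auto intro!: mult_left_le power_le_one simp: abs_mult\<close>)
  have "Fbar p x - Fbar p (x * y) = (\<Sum>n. (if real n > x then p n else 0) - (if real n > x * y then p n else 0))"
    unfolding Fbar_def by (rule suminf_diff[OF Fbar_summ Fbar_summ])
  also have "\<dots> = (\<Sum>n. if x < real n \<and> real n \<le> x * y then p n else 0)"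
    by (rule suminf_cong) (use xy in auto)
  finally have fd: "Fbar p x - Fbar p (x * y) = (\<Sum>n. if x < real n \<and> real n \<le> x * y then p n else 0)" .
  have s3: "summable (\<lambda>n. if x < real n \<and> real n \<le> x * y then p n else 0)"
    by (rule tail_summable[OF nonneg sp])
  have "?b * (Fbar p x - Fbar p (x * y)) = (\<Sum>n. (if x < real n \<and> real n \<le> x * y then p n else 0) * ?b)"
    unfolding fd by (subst mult.commute) (rule suminf_mult2[OF s3])
  also have "\<dots> \<le> R x" unfolding R_def
  proof (rule suminf_le[OF _ _ s2])
    show "summable (\<lambda>n. (if x < real n \<and> real n \<le> x * y then p n else 0) * ?b)"
      by (intro summable_mult2 s3)
    fix n
    show "(if x < real n \<and> real n \<le> x * y then p n else 0) * ?b \<le> (if real n > x then p n * W x ^ n else 0)"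
    proof (cases "x < real n \<and> real n \<le> x * y")
      case True
      have "1 + real n * (- q x) \<le> (1 + - q x) ^ n"
        by (rule Bernoulli_inequality) (use q_bounds[of x] in auto)
      then have "1 - real n * q x \<le> W x ^ n" by (simp add: q_def algebra_simps)
      moreover have "real n * q x \<le> (x * y) * q x"
        using True q_bounds[of x] by (intro mult_right_mono) auto
      then have "real n * q x \<le> q x * x * y" by (simp add: mult_ac)
      ultimately have "?b \<le> W x ^ n" by linarith
      then show ?thesis using True nonneg[of n] by (simp add: mult_left_mono)
    next
      case False
      then show ?thesis using W nonneg[of n] by auto
    qed
  qed
  finally show ?thesis .
qed

lemma RF_lim: "((\<lambda>x. R x / Fbar p x) \<longlongrightarrow> 1) at_top"
proof (rule order_tendstoI)
  fix a :: real assume "a > 1"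
  show "\<forall>\<^sub>F x in at_top. R x / Fbar p x < a"
  proof (rule eventually_at_top_linorderI[of 1])
    fix x :: real assume "1 \<le> x"
    then have F: "Fbar p x > 0" by (intro tail_pos) auto
    then have "R x / Fbar p x \<le> 1" using R_bounds[of x] by simp
    then show "R x / Fbar p x < a" using \<open>a > 1\<close> by linarith
  qed
next
  fix a :: real assume a: "a < 1"
  define e where "e = min (1/2) ((1 - a) / 4)"
  have e: "0 < e" "e \<le> 1/2" "(1 - e) * (1 - e) > a"
  proof -
    show "0 < e" "e \<le> 1/2" using a by (auto simp: e_def)
    have "(1 - e) * (1 - e) \<ge> 1 - 2 * e" by (simp add: algebra_simps)
    moreover have "e \<le> (1 - a) / 4" unfolding e_def by (rule min.cobounded2)
    then have "4 * e \<le> 1 - a" by (simp add: field_simps)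
    then have "1 - 2 * e > a" using a by linarith
    ultimately show "(1 - e) * (1 - e) > a" by linarith
  qed
  have "\<forall>\<^sub>F y in at_top. Limsup at_top (\<lambda>x. ereal (Fbar p (x * y) / Fbar p x)) < ereal e"
    by (rule order_tendstoD(2)[OF tail_cond]) (use e in simp)
  moreover have "\<forall>\<^sub>F y in at_top. (1::real) \<le> y" by (rule eventually_ge_at_top)
  ultimately have "\<forall>\<^sub>F y in at_top. Limsup at_top (\<lambda>x. ereal (Fbar p (x * y) / Fbar p x)) < ereal e \<and> 1 \<le> y"
    by (rule eventually_conj)
  then obtain y where y: "Limsup at_top (\<lambda>x. ereal (Fbar p (x * y) / Fbar p x)) < ereal e" "1 \<le> y"
    unfolding eventually_at_top_linorder by blast
  have ev1: "\<forall>\<^sub>F x in at_top. ereal (Fbar p (x * y) / Fbar p x) < ereal e"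
    by (rule Limsup_lessD[OF y(1)])
  have "((\<lambda>x. q x * x * y) \<longlongrightarrow> 0 * y) at_top" by (intro tendsto_intros qx_lim)
  then have ev2: "\<forall>\<^sub>F x in at_top. q x * x * y < e" using e by (intro order_tendstoD(2)) auto
  have ev3: "\<forall>\<^sub>F x in at_top. (1::real) \<le> x" by (rule eventually_ge_at_top)
  show "\<forall>\<^sub>F x in at_top. a < R x / Fbar p x"
    using ev1 ev2 ev3
  proof eventually_elim
    case (elim x)
    have F: "Fbar p x > 0" using elim by (intro tail_pos) auto
    have r: "Fbar p (x * y) / Fbar p x < e" using elim(1) by simp
    have qb: "0 \<le> q x * x * y" using q_bounds[of x] elim y by simp
    have "(1 - q x * x * y) * (Fbar p x - Fbar p (x * y)) \<le> R x"
      by (rule R_lower) (use elim(2,3) y(2) e(2) in auto)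
    then have "(1 - q x * x * y) * (1 - Fbar p (x * y) / Fbar p x) \<le> R x / Fbar p x"
      by (rule aux2[OF F])
    moreover have "(1 - e) * (1 - e) \<le> (1 - q x * x * y) * (1 - Fbar p (x * y) / Fbar p x)"
      by (rule mult_mono) (use elim(2) r e(2) in auto)
    ultimately show ?case using e by linarith
  qed
qed

lemma final: "(\<lambda>x. max_offspring_tail p x) \<sim>[at_top] (\<lambda>x. sqrt (2 * Fbar p x / (S - 1)))"
proof (rule asymp_equivI')
  let ?G = "\<lambda>x. (R x / Fbar p x) * ((S - 1) / 2) / Phi (q x)"
  have "(?G \<longlongrightarrow> 1 * ((S - 1) / 2) / ((S - 1) / 2)) at_top"
    by (rule tendsto_divide[OF tendsto_mult_right[OF RF_lim] Phi_lim]) (use S_pos in simp)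
  moreover have "1 * ((S - 1) / 2) / ((S - 1) / 2) = 1" using S_pos by simp
  ultimately have "(?G \<longlongrightarrow> 1) at_top" by simp
  then have lim: "((\<lambda>x. sqrt (?G x)) \<longlongrightarrow> sqrt 1) at_top" by (rule tendsto_real_sqrt)
  have ev: "\<forall>\<^sub>F x in at_top. sqrt (?G x) = max_offspring_tail p x / sqrt (2 * Fbar p x / (S - 1))"
  proof (rule eventually_at_top_linorderI[of 1])
    fix x :: real assume "1 \<le> x"
    then have F: "Fbar p x > 0" by (intro tail_pos) auto
    have Ph: "Phi (q x) > 0" using Phi_ge[OF q_bounds] n0 by (meson less_le_trans)
    have "(q x)^2 = R x / Phi (q x)" using qR[of x] Ph by (simp add: field_simps)
    then have qq: "q x = sqrt (R x / Phi (q x))" using q_bounds[of x] by (intro real_sqrt_unique[symmetric]) auto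
    have G: "?G x = (R x / Phi (q x)) / (2 * Fbar p x / (S - 1))"
      by (rule aux_eq[OF F Ph S_pos])
    show "sqrt (?G x) = max_offspring_tail p x / sqrt (2 * Fbar p x / (S - 1))"
      by (simp only: G mot real_sqrt_divide[of "R x / Phi (q x)" "2 * Fbar p x / (S - 1)"] qq[symmetric])
  qed
  show "((\<lambda>x. max_offspring_tail p x / sqrt (2 * Fbar p x / (S - 1))) \<longlongrightarrow> 1) at_top"
    using tendsto_cong[OF ev] lim by (simp only: real_sqrt_one)
qed

end


theorem lemma1:
  fixes p :: "nat \<Rightarrow> real"
  assumes nonneg: "\<And>n. p n \<ge> 0"
    and prob: "p sums 1"
    and critical: "(\<lambda>n. real n * p n) sums 1"
    and nondeg: "p \<noteq> (\<lambda>n. if n = 1 then 1 else 0)"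
    and fin_var: "summable (\<lambda>n. (real n)\<^sup>2 * p n)"
    and tail_pos: "\<And>x. x > 0 \<Longrightarrow> Fbar p x > 0"
    and tail_cond: "((\<lambda>y. Limsup at_top (\<lambda>x. ereal (Fbar p (x * y) / Fbar p x))) \<longlongrightarrow> 0) at_top"
  shows "(\<lambda>x. max_offspring_tail p x) \<sim>[at_top]
           (\<lambda>x. sqrt (2 * Fbar p x / ((\<Sum>n. (real n)\<^sup>2 * p n) - 1)))"
proof -
  interpret gwl2 p
    by unfold_locales (use nonneg prob critical nondeg fin_var tail_pos tail_cond in auto)
  show ?thesis using final unfolding S_def .
qed

end
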